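(* Let $M\subset\mathbb R^2$ be open with coordinates $x=(x^1,x^2)$, let $\lambda_1,\lambda_2$ be smooth functions on $M$, and let $f(x,y)$ be a smooth function on $\mathcal TM$ positively homogeneous of degree 2 in $y=(y^1,y^2)$. Consider the spray of the system $\ddot x^1=\lambda_1(x)f(x,\dot x)$, $\ddot x^2=\lambda_2(x)f(x,\dot x)$. On any open set $U\subset\mathcal TM$ on which $(\lambda_1,\lambda_2)$ does not vanish and the third partial derivatives $\frac{\partial^3 f}{\partial y^i\partial y^j\partial y^k}$ do not all vanish at any point (i.e. $f$ is non-quadratic there), this spray is not Landsberg metrizable.
   Context: For a spray $S=y^i\frac{\partial}{\partial x^i}+f^i(x,y)\frac{\partial}{\partial y^i}$ (here $f^1=\lambda_1f$, $f^2=\lambda_2f$), put $\Gamma^i_j=-\frac12\frac{\partial f^i}{\partial y^j}$, $\Gamma^i_{jk}=\frac{\partial\Gamma^i_j}{\partial y^k}$. For $E$ smooth on $U$, $g_{ij}=\frac{\partial^2E}{\partial y^i\partial y^j}$. $S$ is Landsberg metrizable on $U$ if there is a smooth $E:U\to\mathbb R$ with $(g_{ij})$ positive definite satisfying (H) $y^i\frac{\partial E}{\partial y^i}-2E=0$, (EL) $y^j\frac{\partial^2E}{\partial x^j\partial y^i}+f^j\frac{\partial^2E}{\partial y^j\partial y^i}-\frac{\partial E}{\partial x^i}=0$ ($i=1,2$), and (Ls) $\frac{\partial g_{jk}}{\partial x^i}-\Gamma^l_i\frac{\partial g_{jk}}{\partial y^l}-\Gamma^l_{ik}g_{lj}-\Gamma^l_{ij}g_{lk}=0$.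 *)

theory Defs
  imports "HOL-Analysis.Analysis"
begin

definition pd :: "'a::euclidean_space \<Rightarrow> ('a \<Rightarrow> real) \<Rightarrow> 'a \<Rightarrow> real" where
  "pd b F p = deriv (\<lambda>t. F (p + t *\<^sub>R b)) 0"

fun iter_pd :: "'a::euclidean_space list \<Rightarrow> ('a \<Rightarrow> real) \<Rightarrow> 'a \<Rightarrow> real" where
  "iter_pd [] F = F"
| "iter_pd (b # bs) F = pd b (iter_pd bs F)"

definition smooth_on :: "'a::euclidean_space set \<Rightarrow> ('a \<Rightarrow> real) \<Rightarrow> bool" where
  "smooth_on U F \<longleftrightarrow>
     (\<forall>bs. set bs \<subseteq> Basis \<longrightarrow>
        continuous_on U (iter_pd bs F) \<and>
        (\<forall>b\<in>Basis. \<forall>p\<in>U. (\<lambda>t. iter_pd bs F (p + t *\<^sub>R b)) differentiable (at 0)))"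

(* Points of TM are pairs (x, y) with x = (x^1,x^2), y = (y^1,y^2); indices i \<in> {1,2} *)
type_synonym pt = "(real \<times> real) \<times> (real \<times> real)"

definition ex :: "nat \<Rightarrow> pt" where
  "ex i = (if i = 1 then ((1,0),(0,0)) else ((0,1),(0,0)))"

definition ey :: "nat \<Rightarrow> pt" where
  "ey i = (if i = 1 then ((0,0),(1,0)) else ((0,0),(0,1)))"

definition yc :: "nat \<Rightarrow> pt \<Rightarrow> real" where
  "yc i p = (if i = 1 then fst (snd p) else snd (snd p))"

definition dx :: "nat \<Rightarrow> (pt \<Rightarrow> real) \<Rightarrow> pt \<Rightarrow> real" where
  "dx i F = pd (ex i) F"

definition dy :: "nat \<Rightarrow> (pt \<Rightarrow> real) \<Rightarrow> pt \<Rightarrow> real" where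
  "dy i F = pd (ey i) F"

definition sprayf :: "(real \<times> real \<Rightarrow> real) \<Rightarrow> (real \<times> real \<Rightarrow> real) \<Rightarrow> (pt \<Rightarrow> real)
                      \<Rightarrow> nat \<Rightarrow> pt \<Rightarrow> real" where
  "sprayf l1 l2 f i p = (if i = 1 then l1 (fst p) else l2 (fst p)) * f p"

definition Gam :: "(real \<times> real \<Rightarrow> real) \<Rightarrow> (real \<times> real \<Rightarrow> real) \<Rightarrow> (pt \<Rightarrow> real)
                      \<Rightarrow> nat \<Rightarrow> nat \<Rightarrow> pt \<Rightarrow> real" where
  "Gam l1 l2 f i j p = - (1/2) * dy j (sprayf l1 l2 f i) p"

definition Gam3 :: "(real \<times> real \<Rightarrow> real) \<Rightarrow> (real \<times> real \<Rightarrow> real) \<Rightarrow> (pt \<Rightarrow> real)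
                      \<Rightarrow> nat \<Rightarrow> nat \<Rightarrow> nat \<Rightarrow> pt \<Rightarrow> real" where
  "Gam3 l1 l2 f i j k p = dy k (Gam l1 l2 f i j) p"

definition gmet :: "(pt \<Rightarrow> real) \<Rightarrow> nat \<Rightarrow> nat \<Rightarrow> pt \<Rightarrow> real" where
  "gmet E i j = dy i (dy j E)"

definition landsberg_metrizable ::
  "(real \<times> real \<Rightarrow> real) \<Rightarrow> (real \<times> real \<Rightarrow> real) \<Rightarrow> (pt \<Rightarrow> real) \<Rightarrow> pt set \<Rightarrow> bool" where
  "landsberg_metrizable l1 l2 f U \<longleftrightarrow>
     (\<exists>E. smooth_on U E \<and>
        (\<forall>p\<in>U.
           (\<forall>v::nat \<Rightarrow> real. (v 1, v 2) \<noteq> (0, 0) \<longrightarrow>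
              (\<Sum>i\<in>{1,2}. \<Sum>j\<in>{1,2}. gmet E i j p * v i * v j) > 0) \<and>
           (\<Sum>i\<in>{1,2}. yc i p * dy i E p) - 2 * E p = 0 \<and>
           (\<forall>i\<in>{1,2}.
              (\<Sum>j\<in>{1,2}. yc j p * dx j (dy i E) p)
              + (\<Sum>j\<in>{1,2}. sprayf l1 l2 f j p * dy j (dy i E) p)
              - dx i E p = 0) \<and>
           (\<forall>i\<in>{1,2}. \<forall>j\<in>{1,2}. \<forall>k\<in>{1,2}.
              dx i (gmet E j k) p
              - (\<Sum>l\<in>{1,2}. Gam l1 l2 f l i p * dy l (gmet E j k) p)
              - (\<Sum>l\<in>{1,2}. Gam3 l1 l2 f l i k p * gmet E l j p)
              - (\<Sum>l\<in>{1,2}. Gam3 l1 l2 f l i j p * gmet E l k p) = 0)))"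

end

theory Submission
  imports Defs
begin

lemma pd_has:
  assumes "(\<lambda>t. F (q + t *\<^sub>R b)) differentiable (at 0)"
  shows "((\<lambda>t. F (q + t *\<^sub>R b)) has_real_derivative pd b F q) (at 0)"
  using assms by (simp add: pd_def DERIV_deriv_iff_real_differentiable)

lemma pd_eqI:
  "((\<lambda>t. F (q + t *\<^sub>R b)) has_real_derivative D) (at 0) \<Longrightarrow> pd b F q = D"
  by (simp add: pd_def DERIV_imp_deriv)

lemma line_deriv:
  assumes "(\<lambda>t. F (w + s0 *\<^sub>R b + t *\<^sub>R b)) differentiable (at 0)"
  shows "((\<lambda>s. F (w + s *\<^sub>R b)) has_real_derivative pd b F (w + s0 *\<^sub>R b)) (at s0)"
proof -
  have "((\<lambda>t. F (w + s0 *\<^sub>R b + t *\<^sub>R b)) has_real_derivative pd b F (w + s0 *\<^sub>R b)) (at 0)"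
    using pd_has[OF assms] .
  moreover have "(\<lambda>t. F (w + s0 *\<^sub>R b + t *\<^sub>R b)) = (\<lambda>t. (\<lambda>s. F (w + s *\<^sub>R b)) (t + s0))"
    by (simp add: scaleR_add_left algebra_simps)
  ultimately show ?thesis using DERIV_shift[of "\<lambda>s. F (w + s *\<^sub>R b)" _ 0 s0] by simp
qed

lemma ev_line_in_open:
  fixes q b :: "'a::real_normed_vector"
  assumes "open U" "q \<in> U"
  shows "eventually (\<lambda>t. q + t *\<^sub>R b \<in> U) (nhds 0)"
proof -
  have "open ((\<lambda>t::real. q + t *\<^sub>R b) -` U)"
    by (rule open_vimage[OF assms(1)]) (intro continuous_intros)
  moreover have "0 \<in> (\<lambda>t::real. q + t *\<^sub>R b) -` U" using assms by simp
  ultimately show ?thesis unfolding eventually_nhds by blast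
qed

lemma pd_local:
  assumes "open U" "q \<in> U" "\<And>z. z \<in> U \<Longrightarrow> F z = G z"
  shows "pd b F q = pd b G q"
  unfolding pd_def
  by (rule deriv_cong_ev[OF _ refl]) (use ev_line_in_open[OF assms(1,2), of b] assms(3) in \<open>auto elim: eventually_mono\<close>)

lemma schwarz_aux:
  fixes F :: "'a::euclidean_space \<Rightarrow> real"
  assumes h: "h > 0"
  and inU: "\<And>s t. 0 \<le> s \<Longrightarrow> s \<le> h \<Longrightarrow> 0 \<le> t \<Longrightarrow> t \<le> h \<Longrightarrow> q + s *\<^sub>R a + t *\<^sub>R b \<in> U"
  and da: "\<And>z. z \<in> U \<Longrightarrow> (\<lambda>t. F (z + t *\<^sub>R a)) differentiable (at 0)"
  and dab: "\<And>z. z \<in> U \<Longrightarrow> (\<lambda>t. pd a F (z + t *\<^sub>R b)) differentiable (at 0)"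
  shows "\<exists>\<sigma> \<tau>. 0 < \<sigma> \<and> \<sigma> < h \<and> 0 < \<tau> \<and> \<tau> < h \<and>
     F (q + h *\<^sub>R a + h *\<^sub>R b) - F (q + h *\<^sub>R a) - F (q + h *\<^sub>R b) + F q
       = h * h * pd b (pd a F) (q + \<sigma> *\<^sub>R a + \<tau> *\<^sub>R b)"
proof -
  define f where "f s = F ((q + h *\<^sub>R b) + s *\<^sub>R a) - F (q + s *\<^sub>R a)" for s
  define f' where "f' s = pd a F ((q + h *\<^sub>R b) + s *\<^sub>R a) - pd a F (q + s *\<^sub>R a)" for s
  have "\<exists>\<sigma>. 0 < \<sigma> \<and> \<sigma> < h \<and> f h - f 0 = (h - 0) * f' \<sigma>"
  proof (rule MVT2[OF h])
    fix s assume s: "0 \<le> s" "s \<le> h"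
    have m1: "q + h *\<^sub>R b + s *\<^sub>R a \<in> U" using inU[OF s, of h] h by (simp add: algebra_simps)
    have m2: "q + s *\<^sub>R a \<in> U" using inU[OF s, of 0] h by simp
    show "(f has_real_derivative f' s) (at s)"
      unfolding f_def[abs_def] f'_def
      by (intro DERIV_diff line_deriv da m1 m2)
  qed
  then obtain \<sigma> where sg: "0 < \<sigma>" "\<sigma> < h" "f h - f 0 = h * f' \<sigma>" by auto
  define g where "g t = pd a F ((q + \<sigma> *\<^sub>R a) + t *\<^sub>R b)" for t
  have "\<exists>\<tau>. 0 < \<tau> \<and> \<tau> < h \<and> g h - g 0 = (h - 0) * pd b (pd a F) ((q + \<sigma> *\<^sub>R a) + \<tau> *\<^sub>R b)"
  proof (rule MVT2[OF h])
    fix t assume t: "0 \<le> t" "t \<le> h"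
    have m1: "q + \<sigma> *\<^sub>R a + t *\<^sub>R b \<in> U" using inU[OF _ _ t, of \<sigma>] sg by simp
    show "(g has_real_derivative pd b (pd a F) ((q + \<sigma> *\<^sub>R a) + t *\<^sub>R b)) (at t)"
      unfolding g_def[abs_def]
      by (intro line_deriv dab m1)
  qed
  then obtain \<tau> where tu: "0 < \<tau>" "\<tau> < h" "g h - g 0 = h * pd b (pd a F) ((q + \<sigma> *\<^sub>R a) + \<tau> *\<^sub>R b)" by auto
  have "f' \<sigma> = g h - g 0" unfolding f'_def g_def by (simp add: algebra_simps)
  moreover have "f h - f 0 = F (q + h *\<^sub>R a + h *\<^sub>R b) - F (q + h *\<^sub>R a) - F (q + h *\<^sub>R b) + F q"
    unfolding f_def by (simp add: algebra_simps)
  ultimately show ?thesis using sg tu by (intro exI[of _ \<sigma>] exI[of _ \<tau>]) auto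
qed

lemma schwarz:
  fixes F :: "'a::euclidean_space \<Rightarrow> real"
  assumes U: "open U" "q \<in> U"
  and da: "\<And>z. z \<in> U \<Longrightarrow> (\<lambda>t. F (z + t *\<^sub>R a)) differentiable (at 0)"
  and db: "\<And>z. z \<in> U \<Longrightarrow> (\<lambda>t. F (z + t *\<^sub>R b)) differentiable (at 0)"
  and dab: "\<And>z. z \<in> U \<Longrightarrow> (\<lambda>t. pd a F (z + t *\<^sub>R b)) differentiable (at 0)"
  and dba: "\<And>z. z \<in> U \<Longrightarrow> (\<lambda>t. pd b F (z + t *\<^sub>R a)) differentiable (at 0)"
  and c1: "continuous_on U (pd b (pd a F))" and c2: "continuous_on U (pd a (pd b F))"
  shows "pd b (pd a F) q = pd a (pd b F) q"
proof (rule ccontr)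
  let ?A = "pd b (pd a F) q" and ?B = "pd a (pd b F) q"
  assume ne: "?A \<noteq> ?B"
  define e where "e = \<bar>?A - ?B\<bar> / 2"
  have e: "e > 0" using ne by (simp add: e_def)
  obtain r where r: "r > 0" "ball q r \<subseteq> U" using U open_contains_ball by blast
  have "isCont (pd b (pd a F)) q" using c1 U continuous_on_eq_continuous_at by blast
  then obtain d1 where d1: "d1 > 0" "\<And>z. dist z q < d1 \<Longrightarrow> dist (pd b (pd a F) z) ?A < e"
    using e unfolding continuous_at_eps_delta by blast
  have "isCont (pd a (pd b F)) q" using c2 U continuous_on_eq_continuous_at by blast
  then obtain d2 where d2: "d2 > 0" "\<And>z. dist z q < d2 \<Longrightarrow> dist (pd a (pd b F) z) ?B < e"
    using e unfolding continuous_at_eps_delta by blast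
  define d where "d = min r (min d1 d2)"
  have d: "d > 0" using r d1 d2 by (simp add: d_def)
  define h where "h = d / (2 * (norm a + norm b + 1))"
  have h: "h > 0" proof -
    have "norm a + norm b + 1 > 0" by (smt (verit) norm_ge_zero)
    then show ?thesis using d unfolding h_def by simp
  qed
  have small: "dist (q + s *\<^sub>R a + t *\<^sub>R b) q < d" if "0 \<le> s" "s \<le> h" "0 \<le> t" "t \<le> h" for s t
  proof -
    have "dist (q + s *\<^sub>R a + t *\<^sub>R b) q = norm (s *\<^sub>R a + t *\<^sub>R b)" by (simp add: dist_norm)
    also have "\<dots> \<le> norm (s *\<^sub>R a) + norm (t *\<^sub>R b)" by (rule norm_triangle_ineq)
    also have "\<dots> = s * norm a + t * norm b" using that by simp
    also have "\<dots> \<le> h * norm a + h * norm b" using that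
      by (intro add_mono mult_right_mono) auto
    also have "\<dots> < d"
    proof -
      have pos: "norm a + norm b + 1 > 0" by (smt (verit) norm_ge_zero)
      have "h * (2 * (norm a + norm b + 1)) = d" unfolding h_def using pos by simp
      moreover have "h * norm a + h * norm b < h * (2 * (norm a + norm b + 1))"
        using h by (simp add: algebra_simps) (smt (verit) norm_ge_zero mult_nonneg_nonneg h)
      ultimately show ?thesis by simp
    qed
    finally show ?thesis .
  qed
  have inU: "q + s *\<^sub>R a + t *\<^sub>R b \<in> U" if "0 \<le> s" "s \<le> h" "0 \<le> t" "t \<le> h" for s t
    using small[OF that] r(2) d_def by (auto simp: dist_commute)
  have inU': "q + t *\<^sub>R b + s *\<^sub>R a \<in> U" if "0 \<le> t" "t \<le> h" "0 \<le> s" "s \<le> h" for s t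
    using inU[OF that(3,4,1,2)] by (simp add: algebra_simps)
  obtain \<sigma> \<tau> where st: "0 < \<sigma>" "\<sigma> < h" "0 < \<tau>" "\<tau> < h"
    "F (q + h *\<^sub>R a + h *\<^sub>R b) - F (q + h *\<^sub>R a) - F (q + h *\<^sub>R b) + F q
       = h * h * pd b (pd a F) (q + \<sigma> *\<^sub>R a + \<tau> *\<^sub>R b)"
    using schwarz_aux[OF h inU da dab] by blast
  obtain \<sigma>' \<tau>' where st': "0 < \<sigma>'" "\<sigma>' < h" "0 < \<tau>'" "\<tau>' < h"
    "F (q + h *\<^sub>R b + h *\<^sub>R a) - F (q + h *\<^sub>R b) - F (q + h *\<^sub>R a) + F q
       = h * h * pd a (pd b F) (q + \<sigma>' *\<^sub>R b + \<tau>' *\<^sub>R a)"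
    using schwarz_aux[OF h inU' db dba] by blast
  have eq: "pd b (pd a F) (q + \<sigma> *\<^sub>R a + \<tau> *\<^sub>R b) = pd a (pd b F) (q + \<sigma>' *\<^sub>R b + \<tau>' *\<^sub>R a)"
    using st(5) st'(5) h by (simp add: algebra_simps)
  have z1: "dist (pd b (pd a F) (q + \<sigma> *\<^sub>R a + \<tau> *\<^sub>R b)) ?A < e"
    using small[of \<sigma> \<tau>] st d_def by (intro d1(2)) auto
  have z2: "dist (pd a (pd b F) (q + \<sigma>' *\<^sub>R b + \<tau>' *\<^sub>R a)) ?B < e"
    using small[of \<tau>' \<sigma>'] st' d_def by (intro d2(2)) (auto simp: algebra_simps)
  have aux: "\<And>x y a c::real. \<bar>x - a\<bar> < \<bar>a - c\<bar> / 2 \<Longrightarrow> \<bar>y - c\<bar> < \<bar>a - c\<bar> / 2 \<Longrightarrow> x = y \<Longrightarrow> False"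
    by (simp add: abs_if split: if_splits)
  show False using aux[OF z1[unfolded e_def dist_real_def] z2[unfolded e_def dist_real_def] eq] .
qed

lemma mvt_signed:
  fixes G :: "'a::euclidean_space \<Rightarrow> real"
  assumes d: "\<And>s. \<bar>s\<bar> \<le> \<bar>u\<bar> \<Longrightarrow> (\<lambda>t. G (w + s *\<^sub>R b + t *\<^sub>R b)) differentiable (at 0)"
  shows "\<exists>\<sigma>. \<bar>\<sigma>\<bar> \<le> \<bar>u\<bar> \<and> G (w + u *\<^sub>R b) - G w = u * pd b G (w + \<sigma> *\<^sub>R b)"
proof -
  define f where "f s = G (w + s *\<^sub>R b)" for s
  have der: "(f has_real_derivative pd b G (w + s *\<^sub>R b)) (at s)" if "\<bar>s\<bar> \<le> \<bar>u\<bar>" for s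
    unfolding f_def[abs_def] by (rule line_deriv[OF d[OF that]])
  consider "u = 0" | "u > 0" | "u < 0" by linarith
  then show ?thesis
  proof cases
    case 1 then show ?thesis by (intro exI[of _ 0]) simp
  next
    case 2
    have "\<exists>z. 0 < z \<and> z < u \<and> f u - f 0 = (u - 0) * pd b G (w + z *\<^sub>R b)"
      by (rule MVT2[OF 2]) (rule der, use 2 in auto)
    then obtain z where "0 < z" "z < u" "f u - f 0 = (u - 0) * pd b G (w + z *\<^sub>R b)" by blast
    then show ?thesis unfolding f_def by (intro exI[of _ z]) auto
  next
    case 3
    have "\<exists>z. u < z \<and> z < 0 \<and> f 0 - f u = (0 - u) * pd b G (w + z *\<^sub>R b)"
      by (rule MVT2[OF 3]) (rule der, use 3 in auto)
    then obtain z where "u < z" "z < 0" "f 0 - f u = (0 - u) * pd b G (w + z *\<^sub>R b)" by blast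
    then show ?thesis unfolding f_def by (intro exI[of _ z]) auto
  qed
qed

lemma dir2:
  fixes F :: "'a::euclidean_space \<Rightarrow> real"
  assumes U: "open U" "q \<in> U"
  and da: "\<And>z. z \<in> U \<Longrightarrow> (\<lambda>t. F (z + t *\<^sub>R a)) differentiable (at 0)"
  and db: "\<And>z. z \<in> U \<Longrightarrow> (\<lambda>t. F (z + t *\<^sub>R b)) differentiable (at 0)"
  and cb: "continuous_on U (pd b F)"
  shows "((\<lambda>t. F (q + t *\<^sub>R (c1 *\<^sub>R a + c2 *\<^sub>R b))) has_real_derivative c1 * pd a F q + c2 * pd b F q) (at 0)"
proof -
  define R where "R t = (F (q + (t * c1) *\<^sub>R a + (t * c2) *\<^sub>R b) - F (q + (t * c1) *\<^sub>R a)) / t" for t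
  define S where "S t = (F (q + (t * c1) *\<^sub>R a) - F q) / t" for t
  have "((\<lambda>s. F (q + s *\<^sub>R a)) has_real_derivative pd a F q) (at 0)"
    using pd_has[OF da[OF U(2)]] .
  then have "((\<lambda>t. F (q + (t * c1) *\<^sub>R a)) has_real_derivative pd a F q * c1) (at 0)"
  proof -
    have dd: "((\<lambda>t. t * c1) has_real_derivative c1) (at 0)" by (auto intro!: derivative_eq_intros)
    assume h0: "((\<lambda>s. F (q + s *\<^sub>R a)) has_real_derivative pd a F q) (at 0)"
    have "((\<lambda>s. F (q + s *\<^sub>R a)) has_real_derivative pd a F q) (at ((\<lambda>t. t * c1) 0))"
      using h0 by simp
    from DERIV_chain2[OF this dd] show ?thesis by simp
  qed
  then have S: "S \<midarrow>0\<rightarrow> c1 * pd a F q" unfolding DERIV_def S_def by (simp add: mult.commute)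
  have R: "R \<midarrow>0\<rightarrow> c2 * pd b F q"
  proof (unfold LIM_eq, intro allI impI)
    fix \<epsilon> :: real assume \<epsilon>: "\<epsilon> > 0"
    define e where "e = \<epsilon> / (\<bar>c2\<bar> + 1)"
    have e: "e > 0" using \<epsilon> by (simp add: e_def add_nonneg_pos)
    obtain r where r: "r > 0" "ball q r \<subseteq> U" using U open_contains_ball by blast
    have "isCont (pd b F) q" using cb U continuous_on_eq_continuous_at by blast
    then obtain d1 where d1: "d1 > 0" "\<And>z. dist z q < d1 \<Longrightarrow> dist (pd b F z) (pd b F q) < e"
      using e unfolding continuous_at_eps_delta by blast
    define d where "d = min r d1"
    have d: "d > 0" using r d1 by (simp add: d_def)
    define K where "K = \<bar>c1\<bar> * norm a + \<bar>c2\<bar> * norm b + 1"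
    have K: "K > 0" unfolding K_def by (smt (verit) norm_ge_zero abs_ge_zero mult_nonneg_nonneg)
    define s where "s = d / K"
    have s: "s > 0" using d K by (simp add: s_def)
    show "\<exists>s>0. \<forall>t. t \<noteq> 0 \<and> norm (t - 0) < s \<longrightarrow> norm (R t - c2 * pd b F q) < \<epsilon>"
    proof (intro exI[of _ s] conjI allI impI s)
      fix t :: real assume t: "t \<noteq> 0 \<and> norm (t - 0) < s"
      have close: "dist (q + (t * c1) *\<^sub>R a + \<sigma> *\<^sub>R b) q < d" if "\<bar>\<sigma>\<bar> \<le> \<bar>t * c2\<bar>" for \<sigma>
      proof -
        have "dist (q + (t * c1) *\<^sub>R a + \<sigma> *\<^sub>R b) q = norm ((t * c1) *\<^sub>R a + \<sigma> *\<^sub>R b)"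
          by (simp add: dist_norm)
        also have "\<dots> \<le> norm ((t * c1) *\<^sub>R a) + norm (\<sigma> *\<^sub>R b)" by (rule norm_triangle_ineq)
        also have "\<dots> = \<bar>t\<bar> * \<bar>c1\<bar> * norm a + \<bar>\<sigma>\<bar> * norm b" by (simp add: abs_mult)
        also have "\<dots> \<le> \<bar>t\<bar> * \<bar>c1\<bar> * norm a + \<bar>t\<bar> * \<bar>c2\<bar> * norm b"
          using that by (intro add_left_mono mult_right_mono) (auto simp: abs_mult)
        also have "\<dots> \<le> \<bar>t\<bar> * K" unfolding K_def by (simp add: algebra_simps)
        also have "\<dots> < s * K" using t K by simp
        also have "\<dots> = d" using K by (simp add: s_def)
        finally show ?thesis .
      qed
      have inU: "q + (t * c1) *\<^sub>R a + \<sigma> *\<^sub>R b \<in> U" if "\<bar>\<sigma>\<bar> \<le> \<bar>t * c2\<bar>" for \<sigma>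
        using close[OF that] r(2) by (auto simp: d_def dist_commute)
      obtain \<sigma> where sg: "\<bar>\<sigma>\<bar> \<le> \<bar>t * c2\<bar>"
        "F (q + (t * c1) *\<^sub>R a + (t * c2) *\<^sub>R b) - F (q + (t * c1) *\<^sub>R a)
           = (t * c2) * pd b F (q + (t * c1) *\<^sub>R a + \<sigma> *\<^sub>R b)"
        using mvt_signed[of "t * c2" F "q + (t * c1) *\<^sub>R a" b] db inU by blast
      have Rt: "R t = c2 * pd b F (q + (t * c1) *\<^sub>R a + \<sigma> *\<^sub>R b)"
        unfolding R_def sg(2) using t by simp
      have "\<bar>pd b F (q + (t * c1) *\<^sub>R a + \<sigma> *\<^sub>R b) - pd b F q\<bar> < e"
        using d1(2)[OF less_le_trans[OF close[OF sg(1)]]] by (simp add: d_def dist_real_def)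
      then have "\<bar>c2\<bar> * \<bar>pd b F (q + (t * c1) *\<^sub>R a + \<sigma> *\<^sub>R b) - pd b F q\<bar> \<le> \<bar>c2\<bar> * e"
        by (intro mult_left_mono) auto
      also have "\<dots> < \<epsilon>" using e \<epsilon> unfolding e_def by (simp add: field_simps)
      finally show "norm (R t - c2 * pd b F q) < \<epsilon>"
        by (simp add: Rt abs_mult[symmetric] right_diff_distrib)
    qed
  qed
  have "(\<lambda>t. R t + S t) \<midarrow>0\<rightarrow> c1 * pd a F q + c2 * pd b F q"
    using tendsto_add[OF R S] by (simp add: add.commute)
  moreover have "R t + S t = (F (q + (0 + t) *\<^sub>R (c1 *\<^sub>R a + c2 *\<^sub>R b)) - F (q + 0 *\<^sub>R (c1 *\<^sub>R a + c2 *\<^sub>R b))) / t" for t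
    unfolding R_def S_def by (simp add: add_divide_distrib[symmetric] scaleR_add_right algebra_simps)
  ultimately show ?thesis unfolding DERIV_def by simp
qed

definition ld :: "'a::euclidean_space \<Rightarrow> ('a \<Rightarrow> real) \<Rightarrow> 'a \<Rightarrow> bool" where
  "ld b F q \<longleftrightarrow> (\<lambda>t. F (q + t *\<^sub>R b)) differentiable (at 0)"

lemma ld_hasD: "((\<lambda>t. F (q + t *\<^sub>R b)) has_real_derivative D) (at 0) \<Longrightarrow> ld b F q"
  unfolding ld_def using real_differentiable_def by blast

lemma pd_hasI: "ld b F q \<Longrightarrow> ((\<lambda>t. F (q + t *\<^sub>R b)) has_real_derivative pd b F q) (at 0)"
  unfolding ld_def by (rule pd_has)

lemma pd_add[simp]: "ld b F q \<Longrightarrow> ld b G q \<Longrightarrow> pd b (\<lambda>p. F p + G p) q = pd b F q + pd b G q"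
  by (intro pd_eqI DERIV_add pd_hasI)
lemma ld_add[simp]: "ld b F q \<Longrightarrow> ld b G q \<Longrightarrow> ld b (\<lambda>p. F p + G p) q"
  by (rule ld_hasD, rule DERIV_add, erule pd_hasI, erule pd_hasI)
lemma pd_diff[simp]: "ld b F q \<Longrightarrow> ld b G q \<Longrightarrow> pd b (\<lambda>p. F p - G p) q = pd b F q - pd b G q"
  by (intro pd_eqI DERIV_diff pd_hasI)
lemma ld_diff[simp]: "ld b F q \<Longrightarrow> ld b G q \<Longrightarrow> ld b (\<lambda>p. F p - G p) q"
  by (rule ld_hasD, rule DERIV_diff, erule pd_hasI, erule pd_hasI)
lemma pd_mult[simp]:
  assumes "ld b F q" "ld b G q"
  shows "pd b (\<lambda>p. F p * G p) q = pd b F q * G q + F q * pd b G q"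
proof -
  have "((\<lambda>t. F (q + t *\<^sub>R b) * G (q + t *\<^sub>R b)) has_real_derivative
     pd b F q * G (q + 0 *\<^sub>R b) + pd b G q * F (q + 0 *\<^sub>R b)) (at 0)"
    by (rule DERIV_mult[OF pd_hasI[OF assms(1)] pd_hasI[OF assms(2)]])
  then have "((\<lambda>t. F (q + t *\<^sub>R b) * G (q + t *\<^sub>R b)) has_real_derivative
     pd b F q * G q + F q * pd b G q) (at 0)" by (simp add: algebra_simps)
  from pd_eqI[OF this] show ?thesis .
qed
lemma ld_mult[simp]: "ld b F q \<Longrightarrow> ld b G q \<Longrightarrow> ld b (\<lambda>p. F p * G p) q"
  by (rule ld_hasD, rule DERIV_mult, erule pd_hasI, erule pd_hasI)
lemma pd_const[simp]: "pd b (\<lambda>p. c) q = 0"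
  by (rule pd_eqI) simp
lemma ld_const[simp]: "ld b (\<lambda>p. c) q"
  by (rule ld_hasD[of _ _ _ 0]) simp

lemma pd_minus[simp]: "ld b F q \<Longrightarrow> pd b (\<lambda>p. - F p) q = - pd b F q"
  by (intro pd_eqI DERIV_minus pd_hasI)
lemma ld_minus[simp]: "ld b F q \<Longrightarrow> ld b (\<lambda>p. - F p) q"
  by (rule ld_hasD, rule DERIV_minus, erule pd_hasI)
lemma pd_divc[simp]: "ld b F q \<Longrightarrow> pd b (\<lambda>p. F p / c) q = pd b F q / c"
  by (intro pd_eqI DERIV_cdivide pd_hasI)
lemma ld_divc[simp]: "ld b F q \<Longrightarrow> ld b (\<lambda>p. F p / c) q"
  by (rule ld_hasD, rule DERIV_cdivide, erule pd_hasI)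

lemma iter_pd_append: "iter_pd bs (iter_pd cs F) = iter_pd (bs @ cs) F"
  by (induction bs) auto

lemma smooth_iter: "smooth_on U F \<Longrightarrow> set cs \<subseteq> Basis \<Longrightarrow> smooth_on U (iter_pd cs F)"
  unfolding smooth_on_def iter_pd_append by auto

lemma smooth_pd: "smooth_on U F \<Longrightarrow> b \<in> Basis \<Longrightarrow> smooth_on U (pd b F)"
  using smooth_iter[of U F "[b]"] by simp

lemma smooth_cont: "smooth_on U F \<Longrightarrow> continuous_on U F"
  unfolding smooth_on_def by (metis empty_subsetI empty_set iter_pd.simps(1))

lemma smooth_ld: "smooth_on U F \<Longrightarrow> b \<in> Basis \<Longrightarrow> q \<in> U \<Longrightarrow> ld b F q"
  unfolding smooth_on_def ld_def by (metis empty_subsetI empty_set iter_pd.simps(1))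

lemma smooth_schwarz:
  assumes "open U" "smooth_on U F" "a \<in> Basis" "b \<in> Basis" "q \<in> U"
  shows "pd b (pd a F) q = pd a (pd b F) q"
proof (rule schwarz[OF assms(1,5)])
  have s: "smooth_on U (pd a F)" "smooth_on U (pd b F)" "smooth_on U (pd b (pd a F))" "smooth_on U (pd a (pd b F))"
    using smooth_pd assms by blast+
  show "\<And>z. z \<in> U \<Longrightarrow> (\<lambda>t. F (z + t *\<^sub>R a)) differentiable at 0"
       "\<And>z. z \<in> U \<Longrightarrow> (\<lambda>t. F (z + t *\<^sub>R b)) differentiable at 0"
       "\<And>z. z \<in> U \<Longrightarrow> (\<lambda>t. pd a F (z + t *\<^sub>R b)) differentiable at 0"
       "\<And>z. z \<in> U \<Longrightarrow> (\<lambda>t. pd b F (z + t *\<^sub>R a)) differentiable at 0"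
    using smooth_ld[unfolded ld_def] s assms by blast+
  show "continuous_on U (pd b (pd a F))" "continuous_on U (pd a (pd b F))"
    using smooth_cont s by blast+
qed

lemma ex_Basis[simp]: "ex i \<in> Basis"
  by (simp add: ex_def Basis_prod_def zero_prod_def)
lemma ey_Basis[simp]: "ey i \<in> Basis"
  by (simp add: ey_def Basis_prod_def zero_prod_def)

lemma yc_lin: "yc k (q + t *\<^sub>R b) = yc k q + t * yc k b"
  by (simp add: yc_def)
lemma pd_yc[simp]: "pd b (yc k) q = yc k b"
  by (rule pd_eqI) (simp add: yc_lin, auto intro!: derivative_eq_intros)
lemma ld_yc[simp]: "ld b (yc k) q"
  by (rule ld_hasD) (simp add: yc_lin, auto intro!: derivative_eq_intros)
lemma yc_ey[simp]: "yc k (ey j) = (if (k = 1) = (j = 1) then 1 else 0)"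
  by (simp add: yc_def ey_def)
lemma yc_ex[simp]: "yc k (ex j) = 0"
  by (simp add: yc_def ex_def)
lemma fst_ey[simp]: "fst (ey j) = 0"
  by (simp add: ey_def zero_prod_def)

lemma pd_fst[simp]: "fst b = 0 \<Longrightarrow> pd b (\<lambda>p. c (fst p)) q = 0"
  by (rule pd_eqI) simp
lemma ld_fst[simp]: "fst b = 0 \<Longrightarrow> ld b (\<lambda>p. c (fst p)) q"
  by (rule ld_hasD[of _ _ _ 0]) simp

lemma open_nz: "open (UNIV - {0::real \<times> real})"
  by (simp add: open_Diff)

lemma ey_split: "ey i = (0, snd (ey i))"
  by (metis fst_ey prod.collapse)

lemma hom_phi:
  fixes f :: "pt \<Rightarrow> real"
  assumes hom: "\<forall>x\<in>M. \<forall>y. y \<noteq> 0 \<longrightarrow> (\<forall>t>0. f (x, t *\<^sub>R y) = t\<^sup>2 * f (x, y))"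
  and x: "x \<in> M" and y: "y \<noteq> 0" and s_pos: "s > 0" and ldf: "ld (ey i) f (x, y)"
  shows "dy i f (x, s *\<^sub>R y) = s * dy i f (x, y)"
proof -
  define e where "e = snd (ey i)"
  have eyi: "ey i = (0, e)" unfolding e_def by (rule ey_split)
  have ev: "eventually (\<lambda>t. y + t *\<^sub>R ((1/s) *\<^sub>R e) \<in> UNIV - {0}) (nhds 0)"
    by (rule ev_line_in_open[OF open_nz]) (use y in simp)
  have eq: "f ((x, s *\<^sub>R y) + t *\<^sub>R ey i) = s\<^sup>2 * f ((x, y) + (t / s) *\<^sub>R ey i)"
    if "y + t *\<^sub>R ((1/s) *\<^sub>R e) \<in> UNIV - {0}" for t
  proof -
    have nz: "y + (t / s) *\<^sub>R e \<noteq> 0" using that by (simp add: divide_inverse mult.commute)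
    have "(x, s *\<^sub>R y) + t *\<^sub>R ey i = (x, s *\<^sub>R (y + (t / s) *\<^sub>R e))"
      using s_pos by (simp add: eyi scaleR_add_right)
    moreover have "(x, y) + (t / s) *\<^sub>R ey i = (x, y + (t / s) *\<^sub>R e)"
      by (simp add: eyi)
    moreover have "f (x, s *\<^sub>R (y + (t / s) *\<^sub>R e)) = s\<^sup>2 * f (x, y + (t / s) *\<^sub>R e)"
      using hom x nz s_pos by blast
    ultimately show ?thesis by simp
  qed
  have d0: "((\<lambda>u. f ((x, y) + u *\<^sub>R ey i)) has_real_derivative dy i f (x, y)) (at ((\<lambda>t. t / s) 0))"
    using pd_hasI[OF ldf] by (simp add: dy_def)
  have d1: "((\<lambda>t. t / s) has_real_derivative 1 / s) (at 0)" using s_pos by (auto intro!: derivative_eq_intros)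
  have "((\<lambda>t. s\<^sup>2 * f ((x, y) + (t / s) *\<^sub>R ey i)) has_real_derivative s\<^sup>2 * (dy i f (x, y) * (1 / s))) (at 0)"
    by (rule DERIV_cmult) (rule DERIV_chain2[OF d0 d1])
  then have "((\<lambda>t. f ((x, s *\<^sub>R y) + t *\<^sub>R ey i)) has_real_derivative s * dy i f (x, y)) (at 0)"
  proof (rule DERIV_cong_ev[THEN iffD1, rotated 3])
    show "\<forall>\<^sub>F t in nhds 0. s\<^sup>2 * f ((x, y) + (t / s) *\<^sub>R ey i) = f ((x, s *\<^sub>R y) + t *\<^sub>R ey i)"
      using ev by (rule eventually_mono) (simp add: eq)
  qed (use s_pos in \<open>auto simp: power2_eq_square\<close>)
  then show ?thesis unfolding dy_def by (rule pd_eqI)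
qed

lemma euler1:
  fixes g :: "pt \<Rightarrow> real"
  assumes V: "open V" "smooth_on V g" "q \<in> V"
  and hom1: "\<And>s. s > 0 \<Longrightarrow> g (fst q, s *\<^sub>R snd q) = s * g q"
  shows "yc 1 q * dy 1 g q + yc 2 q * dy 2 g q = g q"
proof -
  have sm: "smooth_on V (pd (ey 2) g)" using smooth_pd[OF V(2) ey_Basis] .
  have D: "((\<lambda>t. g (q + t *\<^sub>R (yc 1 q *\<^sub>R ey 1 + yc 2 q *\<^sub>R ey 2))) has_real_derivative
       yc 1 q * pd (ey 1) g q + yc 2 q * pd (ey 2) g q) (at 0)"
    by (rule dir2[OF V(1,3)], rule smooth_ld[unfolded ld_def, OF V(2) ey_Basis], assumption,
        rule smooth_ld[unfolded ld_def, OF V(2) ey_Basis], assumption, rule smooth_cont[OF sm])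
  have line: "q + t *\<^sub>R (yc 1 q *\<^sub>R ey 1 + yc 2 q *\<^sub>R ey 2) = (fst q, (1 + t) *\<^sub>R snd q)" for t
    by (cases q) (auto simp: ey_def yc_def algebra_simps zero_prod_def)
  have ev: "\<forall>\<^sub>F t in nhds 0. (1 + t) * g q = g (q + t *\<^sub>R (yc 1 q *\<^sub>R ey 1 + yc 2 q *\<^sub>R ey 2))"
  proof -
    have "\<forall>\<^sub>F t in nhds (0::real). t \<in> {-1<..}"
      by (rule eventually_nhds_in_open) auto
    then show ?thesis
    proof (rule eventually_mono)
      fix t :: real assume "t \<in> {-1<..}"
      then show "(1 + t) * g q = g (q + t *\<^sub>R (yc 1 q *\<^sub>R ey 1 + yc 2 q *\<^sub>R ey 2))"
        unfolding line using hom1[of "1 + t"] by simp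
    qed
  qed
  have "((\<lambda>t. (1 + t) * g q) has_real_derivative g q) (at 0)"
    by (auto intro!: derivative_eq_intros)
  then have "((\<lambda>t. g (q + t *\<^sub>R (yc 1 q *\<^sub>R ey 1 + yc 2 q *\<^sub>R ey 2))) has_real_derivative g q) (at 0)"
    by (rule DERIV_cong_ev[THEN iffD1, rotated 3]) (use ev in auto)
  from DERIV_unique[OF D this] show ?thesis by (simp add: dy_def)
qed

lemma step1_alg:
  fixes y El :: "nat \<Rightarrow> real" and g :: "nat \<Rightarrow> nat \<Rightarrow> real" and T :: "nat \<Rightarrow> nat \<Rightarrow> nat \<Rightarrow> real"
    and A :: "nat \<Rightarrow> nat \<Rightarrow> real" and Gm :: "nat \<Rightarrow> real" and Gt :: "nat \<Rightarrow> nat \<Rightarrow> real"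
  assumes LS: "\<And>j k. j \<in> {1,2} \<Longrightarrow> k \<in> {1,2} \<Longrightarrow>
      A j k - (\<Sum>l\<in>{1,2}. Gm l * T l j k) - (\<Sum>l\<in>{1,2}. Gt l k * g l j) - (\<Sum>l\<in>{1,2}. Gt l j * g l k) = 0"
  and H1: "\<And>l. l \<in> {1,2} \<Longrightarrow> (\<Sum>k\<in>{1,2}. y k * g l k) = El l"
  and H3: "\<And>l j. l \<in> {1,2} \<Longrightarrow> j \<in> {1,2} \<Longrightarrow> (\<Sum>k\<in>{1,2}. y k * T l j k) = 0"
  and F1: "\<And>l. l \<in> {1,2} \<Longrightarrow> (\<Sum>k\<in>{1,2}. y k * Gt l k) = Gm l"
  and TA: "2 * a = (\<Sum>j\<in>{1,2}. \<Sum>k\<in>{1,2}. y j * y k * A j k)"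
  shows "a = (\<Sum>l\<in>{1,2}. Gm l * El l)"
proof -
  have "2 * a = (\<Sum>j\<in>{1,2}. \<Sum>k\<in>{1,2}. y j * y k *
      ((\<Sum>l\<in>{1,2}. Gm l * T l j k) + (\<Sum>l\<in>{1,2}. Gt l k * g l j) + (\<Sum>l\<in>{1,2}. Gt l j * g l k)))"
    unfolding TA by (intro sum.cong refl arg_cong2[where f="(*)"]) (use LS in \<open>auto simp: algebra_simps\<close>)
  also have "\<dots> = (\<Sum>l\<in>{1,2}. Gm l * (\<Sum>j\<in>{1,2}. y j * (\<Sum>k\<in>{1,2}. y k * T l j k)))
     + (\<Sum>l\<in>{1,2}. (\<Sum>k\<in>{1,2}. y k * Gt l k) * (\<Sum>j\<in>{1,2}. y j * g l j))
     + (\<Sum>l\<in>{1,2}. (\<Sum>j\<in>{1,2}. y j * Gt l j) * (\<Sum>k\<in>{1,2}. y k * g l k))"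
    by (simp add: algebra_simps)
  also have "\<dots> = (\<Sum>l\<in>{1,2}. Gm l * El l) + (\<Sum>l\<in>{1,2}. Gm l * El l)"
    using H1 H3 F1 by simp
  finally have "2 * a = 2 * (\<Sum>l\<in>{1,2}. Gm l * El l)" by simp
  then show ?thesis by simp
qed

lemma sum12: "(\<Sum>l\<in>{1::nat,2}. F l) = F 1 + F 2"
  by simp

theorem mainTheorem13:
  fixes M :: "(real \<times> real) set"
    and l1 l2 :: "real \<times> real \<Rightarrow> real"
    and f :: "pt \<Rightarrow> real"
    and U :: "pt set"
  assumes "open M"
    and "smooth_on M l1" and "smooth_on M l2"
    and "smooth_on (M \<times> (UNIV - {0})) f"
    and "\<forall>x\<in>M. \<forall>y. y \<noteq> 0 \<longrightarrow> (\<forall>t>0. f (x, t *\<^sub>R y) = t\<^sup>2 * f (x, y))"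
    and "open U" and "U \<noteq> {}" and "U \<subseteq> M \<times> (UNIV - {0})"
    and "\<forall>p\<in>U. (l1 (fst p), l2 (fst p)) \<noteq> (0, 0)"
    and "\<forall>p\<in>U. \<exists>i\<in>{1,2}. \<exists>j\<in>{1,2}. \<exists>k\<in>{1,2}. dy i (dy j (dy k f)) p \<noteq> 0"
  shows "\<not> landsberg_metrizable l1 l2 f U"
proof
  assume "landsberg_metrizable l1 l2 f U"
  then obtain E where smE: "smooth_on U E" and C: "\<forall>p\<in>U.
           (\<forall>v::nat \<Rightarrow> real. (v 1, v 2) \<noteq> (0, 0) \<longrightarrow>
              (\<Sum>i\<in>{1,2}. \<Sum>j\<in>{1,2}. gmet E i j p * v i * v j) > 0) \<and>
           (\<Sum>i\<in>{1,2}. yc i p * dy i E p) - 2 * E p = 0 \<and>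
           (\<forall>i\<in>{1,2}.
              (\<Sum>j\<in>{1,2}. yc j p * dx j (dy i E) p)
              + (\<Sum>j\<in>{1,2}. sprayf l1 l2 f j p * dy j (dy i E) p)
              - dx i E p = 0) \<and>
           (\<forall>i\<in>{1,2}. \<forall>j\<in>{1,2}. \<forall>k\<in>{1,2}.
              dx i (gmet E j k) p
              - (\<Sum>l\<in>{1,2}. Gam l1 l2 f l i p * dy l (gmet E j k) p)
              - (\<Sum>l\<in>{1,2}. Gam3 l1 l2 f l i k p * gmet E l j p)
              - (\<Sum>l\<in>{1,2}. Gam3 l1 l2 f l i j p * gmet E l k p) = 0)"
    unfolding landsberg_metrizable_def by blast
  note oU = assms(6)
  define V where "V = M \<times> (UNIV - {0::real \<times> real})"
  have oV: "open V" unfolding V_def using assms(1) open_nz by (rule open_Times)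
  have UV: "U \<subseteq> V" using assms(8) by (simp add: V_def)
  have smf: "smooth_on V f" using assms(4) by (simp add: V_def)
  note hom = assms(5)
  have smE1: "smooth_on U (pd c E)" if "c \<in> Basis" for c using smooth_pd smE that by blast
  have smE2: "smooth_on U (pd c (pd d E))" if "c \<in> Basis" "d \<in> Basis" for c d using smooth_pd smE1 that by blast
  have smE3: "smooth_on U (pd c (pd d (pd e E)))" if "c \<in> Basis" "d \<in> Basis" "e \<in> Basis" for c d e
    using smooth_pd smE2 that by blast
  have ldE0[simp]: "ld b E q" if "q \<in> U" "b \<in> Basis" for q b using smooth_ld smE that by blast
  have ldE1[simp]: "ld b (pd c E) q" if "q \<in> U" "b \<in> Basis" "c \<in> Basis" for q b c
    using smooth_ld smE1 that by blast
  have ldE2[simp]: "ld b (pd c (pd d E)) q" if "q \<in> U" "b \<in> Basis" "c \<in> Basis" "d \<in> Basis" for q b c d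
    using smooth_ld smE2 that by blast
  have ldE3[simp]: "ld b (pd c (pd d (pd e E))) q" if "q \<in> U" "b \<in> Basis" "c \<in> Basis" "d \<in> Basis" "e \<in> Basis" for q b c d e
    using smooth_ld smE3 that by blast
  have smf1: "smooth_on V (pd c f)" if "c \<in> Basis" for c using smooth_pd smf that by blast
  have smf2: "smooth_on V (pd c (pd d f))" if "c \<in> Basis" "d \<in> Basis" for c d using smooth_pd smf1 that by blast
  have ldf0[simp]: "ld b f q" if "q \<in> V" "b \<in> Basis" for q b using smooth_ld smf that by blast
  have ldf1[simp]: "ld b (pd c f) q" if "q \<in> V" "b \<in> Basis" "c \<in> Basis" for q b c
    using smooth_ld smf1 that by blast
  have ldf2[simp]: "ld b (pd c (pd d f)) q" if "q \<in> V" "b \<in> Basis" "c \<in> Basis" "d \<in> Basis" for q b c d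
    using smooth_ld smf2 that by blast
  have schE: "pd (ey a) (pd (ey b) E) q = pd (ey b) (pd (ey a) E) q" if "q \<in> U" for a b q
    using smooth_schwarz[OF oU smE ey_Basis ey_Basis that] by simp
  define lam where "lam l x = (if l = (1::nat) then l1 x else l2 x)" for l x
  have G1: "Gam l1 l2 f l i q = -(1/2) * (lam l (fst q) * pd (ey i) f q)" if "q \<in> V" for q l i
    using that unfolding Gam_def sprayf_def dy_def lam_def by (cases "l = 1") simp_all
  have G3: "Gam3 l1 l2 f l i k q = -(1/2) * (lam l (fst q) * pd (ey k) (pd (ey i) f) q)" if "q \<in> U" for q l i k
  proof -
    have "Gam3 l1 l2 f l i k q = pd (ey k) (\<lambda>p. -(1/2) * (lam l (fst p) * pd (ey i) f p)) q"
      unfolding Gam3_def dy_def by (rule pd_local[OF oU that]) (use G1 UV in auto)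
    also have "\<dots> = -(1/2) * (lam l (fst q) * pd (ey k) (pd (ey i) f) q)"
      using that UV by (auto simp: subsetD)
    finally show ?thesis .
  qed
  have H: "yc 1 q * pd (ey 1) E q + yc 2 q * pd (ey 2) E q - 2 * E q = 0" if "q \<in> U" for q
    using C that unfolding dy_def by simp
  have H1: "yc 1 q * pd (ey j) (pd (ey 1) E) q + yc 2 q * pd (ey j) (pd (ey 2) E) q = pd (ey j) E q"
    if q: "q \<in> U" and j: "j \<in> {1,2}" for q j
  proof -
    have "pd (ey j) (\<lambda>p. yc 1 p * pd (ey 1) E p + yc 2 p * pd (ey 2) E p - 2 * E p) q = pd (ey j) (\<lambda>p. 0) q"
      by (rule pd_local[OF oU q]) (use H in auto)
    then show ?thesis using j q by auto
  qed

  have H2: "(\<Sum>j\<in>{1,2}. \<Sum>k\<in>{1,2}. yc j q * yc k q * pd (ey j) (pd (ey k) E) q) = 2 * E q"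
    if q: "q \<in> U" for q
  proof -
    have "(\<Sum>j\<in>{1,2}. \<Sum>k\<in>{1,2}. yc j q * yc k q * pd (ey j) (pd (ey k) E) q)
        = (\<Sum>j\<in>{1,2}. yc j q * (yc 1 q * pd (ey j) (pd (ey 1) E) q + yc 2 q * pd (ey j) (pd (ey 2) E) q))"
      by (simp add: algebra_simps)
    also have "\<dots> = (\<Sum>j\<in>{1,2}. yc j q * pd (ey j) E q)"
      using H1[OF q] by simp
    also have "\<dots> = 2 * E q" using H[OF q] by simp
    finally show ?thesis .
  qed
  have TA: "2 * pd (ex i) E q = (\<Sum>j\<in>{1,2}. \<Sum>k\<in>{1,2}. yc j q * yc k q * pd (ex i) (pd (ey j) (pd (ey k) E)) q)"
    if q: "q \<in> U" for q i
  proof -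
    have "pd (ex i) (\<lambda>p. 2 * E p) q = pd (ex i) (\<lambda>p. \<Sum>j\<in>{1,2}. \<Sum>k\<in>{1,2}. yc j p * yc k p * pd (ey j) (pd (ey k) E) p) q"
      by (rule pd_local[OF oU q]) (use H2 in auto)
    then show ?thesis using q by simp
  qed
  have H3: "(\<Sum>k\<in>{1,2}. yc k q * pd (ey l) (pd (ey j) (pd (ey k) E)) q) = 0"
    if q: "q \<in> U" and j: "j \<in> {1,2}" and l: "l \<in> {1,2}" for q j l
  proof -
    have "pd (ey l) (\<lambda>p. yc 1 p * pd (ey j) (pd (ey 1) E) p + yc 2 p * pd (ey j) (pd (ey 2) E) p - pd (ey j) E p) q = pd (ey l) (\<lambda>p. 0) q"
      by (rule pd_local[OF oU q]) (use H1 j in auto)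
    then have "yc 1 (ey l) * pd (ey j) (pd (ey 1) E) q + yc 2 (ey l) * pd (ey j) (pd (ey 2) E) q
       + (yc 1 q * pd (ey l) (pd (ey j) (pd (ey 1) E)) q + yc 2 q * pd (ey l) (pd (ey j) (pd (ey 2) E)) q)
       - pd (ey l) (pd (ey j) E) q = 0" using q by (simp add: algebra_simps)
    moreover have "yc 1 (ey l) * pd (ey j) (pd (ey 1) E) q + yc 2 (ey l) * pd (ey j) (pd (ey 2) E) q
       = pd (ey l) (pd (ey j) E) q" using l schE[OF q, of j] by auto
    ultimately show ?thesis by simp
  qed
  have F1: "(\<Sum>k\<in>{1,2}. yc k q * pd (ey k) (pd (ey i) f) q) = pd (ey i) f q" if q: "q \<in> U" for q i
  proof -
    have qV: "q \<in> V" using q UV by auto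
    obtain x y where xy: "q = (x, y)" by (cases q)
    have x: "x \<in> M" and y: "y \<noteq> 0" using qV xy by (auto simp: V_def)
    have "yc 1 q * dy 1 (pd (ey i) f) q + yc 2 q * dy 2 (pd (ey i) f) q = pd (ey i) f q"
    proof (rule euler1[OF oV smf1[OF ey_Basis] qV])
      fix s :: real assume s: "s > 0"
      show "pd (ey i) f (fst q, s *\<^sub>R snd q) = s * pd (ey i) f q"
        using hom_phi[OF hom x y s ldf0[OF _ ey_Basis]] qV xy by (simp add: dy_def)
    qed
    then show ?thesis by (simp add: dy_def)
  qed
  have LS: "pd (ex i) (pd (ey j) (pd (ey k) E)) q
      - (\<Sum>l\<in>{1,2}. (-(1/2) * (lam l (fst q) * pd (ey i) f q)) * pd (ey l) (pd (ey j) (pd (ey k) E)) q)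
      - (\<Sum>l\<in>{1,2}. (-(1/2) * (lam l (fst q) * pd (ey k) (pd (ey i) f) q)) * pd (ey l) (pd (ey j) E) q)
      - (\<Sum>l\<in>{1,2}. (-(1/2) * (lam l (fst q) * pd (ey j) (pd (ey i) f) q)) * pd (ey l) (pd (ey k) E) q) = 0"
    if q: "q \<in> U" and i: "i \<in> {1,2}" and j: "j \<in> {1,2}" and k: "k \<in> {1,2}" for q i j k
  proof -
    have qV: "q \<in> V" using q UV by auto
    have "dx i (gmet E j k) q
              - (\<Sum>l\<in>{1,2}. Gam l1 l2 f l i q * dy l (gmet E j k) q)
              - (\<Sum>l\<in>{1,2}. Gam3 l1 l2 f l i k q * gmet E l j q)
              - (\<Sum>l\<in>{1,2}. Gam3 l1 l2 f l i j q * gmet E l k q) = 0"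
      using C q i j k by blast
    then show ?thesis unfolding G1[OF qV] G3[OF q] by (simp add: dx_def dy_def gmet_def)
  qed
  define h where "h p = lam 1 (fst p) * pd (ey 1) E p + lam 2 (fst p) * pd (ey 2) E p" for p
  have D: "pd (ex i) E q = -(1/2) * (pd (ey i) f q * h q)" if q: "q \<in> U" and i: "i \<in> {1,2}" for q i
  proof -
    have "pd (ex i) E q = (\<Sum>l\<in>{1,2}. (-(1/2) * (lam l (fst q) * pd (ey i) f q)) * pd (ey l) E q)"
    proof -
      have F1': "(\<Sum>k\<in>{1,2}. yc k q * (-(1/2) * (lam l (fst q) * pd (ey k) (pd (ey i) f) q)))
          = -(1/2) * (lam l (fst q) * pd (ey i) f q)" if "l \<in> {1,2}" for l
      proof -
        have "(\<Sum>k\<in>{1,2}. yc k q * (-(1/2) * (lam l (fst q) * pd (ey k) (pd (ey i) f) q)))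
          = -(1/2) * lam l (fst q) * (\<Sum>k\<in>{1,2}. yc k q * pd (ey k) (pd (ey i) f) q)"
          by (simp add: algebra_simps)
        then show ?thesis using F1[OF q, of i] by simp
      qed
      have H1': "(\<Sum>k\<in>{1,2}. yc k q * pd (ey l) (pd (ey k) E) q) = pd (ey l) E q" if "l \<in> {1,2}" for l
        using H1[OF q that] by simp
      have H3': "(\<Sum>k\<in>{1,2}. yc k q * pd (ey l) (pd (ey j) (pd (ey k) E)) q) = 0"
        if "l \<in> {1,2}" "j \<in> {1,2}" for l j
        using H3[OF q that(2) that(1)] .
      show ?thesis
        by (rule step1_alg[where y="\<lambda>k. yc k q" and g="\<lambda>l k. pd (ey l) (pd (ey k) E) q"
          and T="\<lambda>l j k. pd (ey l) (pd (ey j) (pd (ey k) E)) q"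
          and A="\<lambda>j k. pd (ex i) (pd (ey j) (pd (ey k) E)) q"
          and Gt="\<lambda>l k. -(1/2) * (lam l (fst q) * pd (ey k) (pd (ey i) f) q)"
          and Gm="\<lambda>l. -(1/2) * (lam l (fst q) * pd (ey i) f q)"
          and El="\<lambda>l. pd (ey l) E q" and a="pd (ex i) E q",
          OF LS[OF q i] H1' H3' F1' TA[OF q]])
    qed
    then show ?thesis by (simp add: h_def algebra_simps)
  qed

  define hk where "hk k p = lam 1 (fst p) * pd (ey k) (pd (ey 1) E) p + lam 2 (fst p) * pd (ey k) (pd (ey 2) E) p" for k p
  have Dk: "pd (ey k) (pd (ex i) E) q = -(1/2) * (pd (ey k) (pd (ey i) f) q * h q + pd (ey i) f q * hk k q)"
    if q: "q \<in> U" and i: "i \<in> {1,2}" for q i k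
  proof -
    have qV: "q \<in> V" using q UV by auto
    have "pd (ey k) (pd (ex i) E) q = pd (ey k) (\<lambda>p. -(1/2) * (pd (ey i) f p * h p)) q"
      by (rule pd_local[OF oU q]) (use D i in auto)
    also have "\<dots> = -(1/2) * (pd (ey k) (pd (ey i) f) q * h q + pd (ey i) f q * hk k q)"
      using q qV by (simp add: h_def hk_def field_simps)
    finally show ?thesis .
  qed
  have Djk: "pd (ey j) (pd (ey k) (pd (ex i) E)) q = -(1/2) * (pd (ey j) (pd (ey k) (pd (ey i) f)) q * h q
       + pd (ey k) (pd (ey i) f) q * hk j q + pd (ey j) (pd (ey i) f) q * hk k q
       + pd (ey i) f q * (lam 1 (fst q) * pd (ey j) (pd (ey k) (pd (ey 1) E)) q + lam 2 (fst q) * pd (ey j) (pd (ey k) (pd (ey 2) E)) q))"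
    if q: "q \<in> U" and i: "i \<in> {1,2}" for q i j k
  proof -
    have qV: "q \<in> V" using q UV by auto
    have "pd (ey j) (pd (ey k) (pd (ex i) E)) q = pd (ey j) (\<lambda>p. -(1/2) * (pd (ey k) (pd (ey i) f) p * h p + pd (ey i) f p * hk k p)) q"
      by (rule pd_local[OF oU q]) (use Dk i in auto)
    also have "\<dots> = -(1/2) * (pd (ey j) (pd (ey k) (pd (ey i) f)) q * h q
       + pd (ey k) (pd (ey i) f) q * hk j q + pd (ey j) (pd (ey i) f) q * hk k q
       + pd (ey i) f q * (lam 1 (fst q) * pd (ey j) (pd (ey k) (pd (ey 1) E)) q + lam 2 (fst q) * pd (ey j) (pd (ey k) (pd (ey 2) E)) q))"
      using q qV by (simp add: h_def hk_def field_simps)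
    finally show ?thesis .
  qed
  have mix: "pd (ex i) (pd (ey j) (pd (ey k) E)) q = pd (ey j) (pd (ey k) (pd (ex i) E)) q"
    if q: "q \<in> U" for q i j k
  proof -
    have "pd (ex i) (pd (ey j) (pd (ey k) E)) q = pd (ey j) (pd (ex i) (pd (ey k) E)) q"
      using smooth_schwarz[OF oU smE1[OF ey_Basis] ey_Basis ex_Basis q] .
    also have "\<dots> = pd (ey j) (pd (ey k) (pd (ex i) E)) q"
      by (rule pd_local[OF oU q]) (use smooth_schwarz[OF oU smE ey_Basis ex_Basis] in auto)
    finally show ?thesis .
  qed
  have trip: "pd (ey l) (pd (ey j) (pd (ey k) E)) q = pd (ey j) (pd (ey k) (pd (ey l) E)) q"
    if q: "q \<in> U" for q l j k
  proof -
    have "pd (ey l) (pd (ey j) (pd (ey k) E)) q = pd (ey j) (pd (ey l) (pd (ey k) E)) q"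
      using smooth_schwarz[OF oU smE1[OF ey_Basis] ey_Basis ey_Basis q] .
    also have "\<dots> = pd (ey j) (pd (ey k) (pd (ey l) E)) q"
      by (rule pd_local[OF oU q]) (use schE in auto)
    finally show ?thesis .
  qed
  have S2: "pd (ey j) (pd (ey k) (pd (ey i) f)) q * h q = 0"
    if q: "q \<in> U" and i: "i \<in> {1,2}" and j: "j \<in> {1,2}" and k: "k \<in> {1,2}" for q i j k
  proof -
    have L: "pd (ex i) (pd (ey j) (pd (ey k) E)) q
      - (\<Sum>l\<in>{1,2}. (-(1/2) * (lam l (fst q) * pd (ey i) f q)) * pd (ey l) (pd (ey j) (pd (ey k) E)) q)
      - (\<Sum>l\<in>{1,2}. (-(1/2) * (lam l (fst q) * pd (ey k) (pd (ey i) f) q)) * pd (ey l) (pd (ey j) E) q)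
      - (\<Sum>l\<in>{1,2}. (-(1/2) * (lam l (fst q) * pd (ey j) (pd (ey i) f) q)) * pd (ey l) (pd (ey k) E) q) = 0"
      by (rule LS[OF q i j k])
    have "pd (ex i) (pd (ey j) (pd (ey k) E)) q
      - (\<Sum>l\<in>{1,2}. (-(1/2) * (lam l (fst q) * pd (ey i) f q)) * pd (ey l) (pd (ey j) (pd (ey k) E)) q)
      - (\<Sum>l\<in>{1,2}. (-(1/2) * (lam l (fst q) * pd (ey k) (pd (ey i) f) q)) * pd (ey l) (pd (ey j) E) q)
      - (\<Sum>l\<in>{1,2}. (-(1/2) * (lam l (fst q) * pd (ey j) (pd (ey i) f) q)) * pd (ey l) (pd (ey k) E) q)
      = -(1/2) * (pd (ey j) (pd (ey k) (pd (ey i) f)) q * h q)"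
      unfolding sum12 mix[OF q] Djk[OF q i] trip[OF q, of 1] trip[OF q, of 2]
        schE[OF q, of 1 j] schE[OF q, of 2 j] schE[OF q, of 1 k] schE[OF q, of 2 k]
      by (simp add: hk_def h_def field_simps)
    then show ?thesis using L by simp
  qed

  have h0: "h q = 0" if q: "q \<in> U" for q
  proof -
    obtain i' j' k' where ijk: "i' \<in> {1,2}" "j' \<in> {1,2}" "k' \<in> {1,2}"
      and nz: "pd (ey i') (pd (ey j') (pd (ey k') f)) q \<noteq> 0"
      using assms(10) q unfolding dy_def by blast
    show ?thesis using S2[OF q ijk(3) ijk(1) ijk(2)] nz by simp
  qed
  obtain q where q: "q \<in> U" using assms(7) by blast
  have hj: "lam 1 (fst q) * pd (ey j) (pd (ey 1) E) q + lam 2 (fst q) * pd (ey j) (pd (ey 2) E) q = 0" for j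
  proof -
    have "pd (ey j) h q = pd (ey j) (\<lambda>p. 0) q" by (rule pd_local[OF oU q]) (use h0 in auto)
    then show ?thesis using q by (simp add: h_def[abs_def])
  qed
  have nzv: "(lam 1 (fst q), lam 2 (fst q)) \<noteq> (0, 0)" using assms(9) q by (simp add: lam_def)
  have "(\<Sum>i\<in>{1,2}. \<Sum>j\<in>{1,2}. gmet E i j q * lam i (fst q) * lam j (fst q)) > 0"
  proof -
    have PDq: "\<forall>v::nat \<Rightarrow> real. (v 1, v 2) \<noteq> (0, 0) \<longrightarrow>
              (\<Sum>i\<in>{1,2}. \<Sum>j\<in>{1,2}. gmet E i j q * v i * v j) > 0" using C q by blast
    show ?thesis using mp[OF spec[OF PDq, of "\<lambda>l. lam l (fst q)"] nzv] .
  qed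
  moreover have "(\<Sum>i\<in>{1,2}. \<Sum>j\<in>{1,2}. gmet E i j q * lam i (fst q) * lam j (fst q))
     = lam 1 (fst q) * (lam 1 (fst q) * pd (ey 1) (pd (ey 1) E) q + lam 2 (fst q) * pd (ey 1) (pd (ey 2) E) q)
     + lam 2 (fst q) * (lam 1 (fst q) * pd (ey 2) (pd (ey 1) E) q + lam 2 (fst q) * pd (ey 2) (pd (ey 2) E) q)"
    unfolding sum12 gmet_def dy_def by (simp add: algebra_simps)
  ultimately show False using hj[of 1] hj[of 2] by simp
qed

end
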